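(* Let $(T,s)$ be a parking function on a rooted tree $T$ with vertex set $[n]$, and let $e=(u,v)$ be an edge of $T$ (oriented $u\to v$, towards the root). Then $e$ is used by $s$ if and only if $|T_u|<|\{i: s_i\in T_u\}|$. Furthermore, the set of edges used by $s$ is invariant under permutations of the entries of $s$.
   Context: $T$ is a rooted tree on vertex set $[n]$ with edges oriented towards the root; an edge $u\to v$ is written $(u,v)$. For $s\in[n]^n$, drivers $1,\dots,n$ arrive in order; driver $i$ parks at $s_i$ if unoccupied, otherwise follows the directed path towards the root and parks at the first unoccupied vertex, leaving if none exists. $(T,s)$ is a parking function if all drivers park. $T_u$ denotes the set of vertices $w$ having a directed path from $w$ to $u$ (including $u$). An edge $e$ is used by $s$ if some driver, after failing to park at her preferred vertex, crosses $e$ during her search for an unoccupied vertex. *)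

theory Defs
  imports "HOL-Library.Multiset"
begin

(* Edges are (u, par u) for u in {1..n}, u \<noteq> r (oriented towards the root). *)
definition rooted_tree :: "nat \<Rightarrow> nat \<Rightarrow> (nat \<Rightarrow> nat) \<Rightarrow> bool" where
  "rooted_tree n r par \<longleftrightarrow> r \<in> {1..n} \<and> par r = r \<and>
     (\<forall>v\<in>{1..n}. par v \<in> {1..n}) \<and> (\<forall>v\<in>{1..n}. \<exists>k. (par ^^ k) v = r)"

definition tree_edges :: "nat \<Rightarrow> nat \<Rightarrow> (nat \<Rightarrow> nat) \<Rightarrow> (nat \<times> nat) set" where
  "tree_edges n r par = {(u, par u) | u. u \<in> {1..n} \<and> u \<noteq> r}"

definition depth :: "(nat \<Rightarrow> nat) \<Rightarrow> nat \<Rightarrow> nat \<Rightarrow> nat" where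
  "depth par r v = (LEAST k. (par ^^ k) v = r)"

definition subtree :: "nat \<Rightarrow> (nat \<Rightarrow> nat) \<Rightarrow> nat \<Rightarrow> nat set" where
  "subtree n par u = {w \<in> {1..n}. \<exists>k. (par ^^ k) w = u}"

(* a driver preferring v, with occupied set Occ, finds a free vertex on her path to the root *)
definition finds_spot :: "(nat \<Rightarrow> nat) \<Rightarrow> nat \<Rightarrow> nat set \<Rightarrow> nat \<Rightarrow> bool" where
  "finds_spot par r Occ v \<longleftrightarrow> (\<exists>k \<le> depth par r v. (par ^^ k) v \<notin> Occ)"

(* number of steps along the path the driver makes; if no free vertex, she walks to the root and leaves *)
definition stop_index :: "(nat \<Rightarrow> nat) \<Rightarrow> nat \<Rightarrow> nat set \<Rightarrow> nat \<Rightarrow> nat" where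
  "stop_index par r Occ v =
     (if finds_spot par r Occ v then (LEAST k. k \<le> depth par r v \<and> (par ^^ k) v \<notin> Occ)
      else depth par r v)"

definition crossed :: "(nat \<Rightarrow> nat) \<Rightarrow> nat \<Rightarrow> nat set \<Rightarrow> nat \<Rightarrow> (nat \<times> nat) set" where
  "crossed par r Occ v = {((par ^^ j) v, (par ^^ Suc j) v) | j. j < stop_index par r Occ v}"

definition park_update :: "(nat \<Rightarrow> nat) \<Rightarrow> nat \<Rightarrow> nat set \<Rightarrow> nat \<Rightarrow> nat set" where
  "park_update par r Occ v =
     (if finds_spot par r Occ v then insert ((par ^^ stop_index par r Occ v) v) Occ else Occ)"

(* occupied vertices after the first i drivers (driver j+1 prefers s ! j) *)
definition occ_after :: "(nat \<Rightarrow> nat) \<Rightarrow> nat \<Rightarrow> nat list \<Rightarrow> nat \<Rightarrow> nat set" where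
  "occ_after par r s i = foldl (park_update par r) {} (take i s)"

definition parking_function :: "nat \<Rightarrow> nat \<Rightarrow> (nat \<Rightarrow> nat) \<Rightarrow> nat list \<Rightarrow> bool" where
  "parking_function n r par s \<longleftrightarrow> rooted_tree n r par \<and> length s = n \<and> set s \<subseteq> {1..n} \<and>
     (\<forall>i < n. finds_spot par r (occ_after par r s i) (s ! i))"

(* edges used by s: crossed by some driver after failing at her preferred vertex
   (crossing any edge implies she failed at her preferred vertex) *)
definition used_edges :: "(nat \<Rightarrow> nat) \<Rightarrow> nat \<Rightarrow> nat list \<Rightarrow> (nat \<times> nat) set" where
  "used_edges par r s = (\<Union>i < length s. crossed par r (occ_after par r s i) (s ! i))"

end

theory Submission
  imports Defs
begin

definition gstep :: "(nat \<Rightarrow> nat) \<Rightarrow> nat \<Rightarrow> nat set \<times> (nat \<times> nat) set \<Rightarrow> nat \<Rightarrow> nat set \<times> (nat \<times> nat) set" where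
  "gstep par r st x = (park_update par r (fst st) x, snd st \<union> crossed par r (fst st) x)"

lemma funpow_in:
  assumes "rooted_tree n r par" "v \<in> {1..n}"
  shows "(par ^^ k) v \<in> {1..n}"
  using assms by (induction k) (auto simp: rooted_tree_def)

lemma funpow_root:
  assumes "par r = r" shows "(par ^^ k) r = r"
  using assms by (induction k) auto

lemma depth_spec:
  assumes "rooted_tree n r par" "v \<in> {1..n}"
  shows "(par ^^ depth par r v) v = r"
  using assms unfolding rooted_tree_def depth_def by (metis (mono_tags) LeastI_ex)

lemma depth_r: "depth par r r = 0"
  unfolding depth_def by (rule Least_eq_0) simp

lemma depth_par:
  assumes T: "rooted_tree n r par" and v: "v \<in> {1..n}" "v \<noteq> r"
  shows "depth par r v = Suc (depth par r (par v))"
proof -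
  have pv: "par v \<in> {1..n}" using T v by (auto simp: rooted_tree_def)
  define d where "d = depth par r v"
  have dv: "(par ^^ d) v = r" using depth_spec[OF T v(1)] d_def by simp
  have "d \<noteq> 0" using dv v by (metis funpow_0)
  then obtain d' where d': "d = Suc d'" by (cases d) auto
  have "(par ^^ d') (par v) = r" using dv d' by (simp add: funpow_Suc_right del: funpow.simps)
  hence le1: "depth par r (par v) \<le> d'" unfolding depth_def by (rule Least_le)
  have "(par ^^ Suc (depth par r (par v))) v = r"
    using depth_spec[OF T pv] by (simp add: funpow_Suc_right del: funpow.simps)
  hence "d \<le> Suc (depth par r (par v))" unfolding d_def depth_def by (rule Least_le)
  with le1 d' show ?thesis unfolding d_def by simp
qed

lemma L1:
  assumes "x \<notin> Oc"
  shows "park_update par r Oc x = insert x Oc \<and> crossed par r Oc x = {}"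
proof -
  have f: "finds_spot par r Oc x" unfolding finds_spot_def using assms by (intro exI[of _ 0]) auto
  have s: "stop_index par r Oc x = 0" unfolding stop_index_def using f assms
    by (simp add: Least_eq_0)
  show ?thesis using f s unfolding park_update_def crossed_def by simp
qed

lemma L2:
  assumes "r \<in> Oc"
  shows "park_update par r Oc r = Oc \<and> crossed par r Oc r = {}"
proof -
  have f: "\<not> finds_spot par r Oc r" unfolding finds_spot_def depth_r using assms by simp
  have s: "stop_index par r Oc r = 0" unfolding stop_index_def using f depth_r by simp
  show ?thesis using f s unfolding park_update_def crossed_def by simp
qed

lemma L3:
  assumes T: "rooted_tree n r par" and x: "x \<in> {1..n}" "x \<in> Oc" "x \<noteq> r"
  shows "park_update par r Oc x = park_update par r Oc (par x) \<and>
         crossed par r Oc x = insert (x, par x) (crossed par r Oc (par x))"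
proof -
  have dp: "depth par r x = Suc (depth par r (par x))" using depth_par[OF T x(1) x(3)] .
  have fe: "finds_spot par r Oc x = finds_spot par r Oc (par x)"
    unfolding finds_spot_def dp
  proof
    assume "\<exists>k\<le>Suc (depth par r (par x)). (par ^^ k) x \<notin> Oc"
    then obtain k where k: "k \<le> Suc (depth par r (par x))" "(par ^^ k) x \<notin> Oc" by blast
    then obtain k' where "k = Suc k'" using x(2) by (cases k) auto
    thus "\<exists>k\<le>depth par r (par x). (par ^^ k) (par x) \<notin> Oc"
      using k by (intro exI[of _ k']) (simp add: funpow_Suc_right del: funpow.simps)
  next
    assume "\<exists>k\<le>depth par r (par x). (par ^^ k) (par x) \<notin> Oc"
    then obtain k where k: "k \<le> depth par r (par x)" "(par ^^ k) (par x) \<notin> Oc" by blast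
    thus "\<exists>k\<le>Suc (depth par r (par x)). (par ^^ k) x \<notin> Oc"
      by (intro exI[of _ "Suc k"]) (simp add: funpow_Suc_right del: funpow.simps)
  qed
  have se: "stop_index par r Oc x = Suc (stop_index par r Oc (par x))"
  proof (cases "finds_spot par r Oc (par x)")
    case True
    then obtain k where k: "k \<le> depth par r (par x)" "(par ^^ k) (par x) \<notin> Oc"
      unfolding finds_spot_def by blast
    have "(LEAST k. k \<le> depth par r x \<and> (par ^^ k) x \<notin> Oc) =
          Suc (LEAST m. Suc m \<le> depth par r x \<and> (par ^^ Suc m) x \<notin> Oc)"
      by (rule Least_Suc[of _ "Suc k"]) (use k x(2) dp in \<open>auto simp: funpow_Suc_right simp del: funpow.simps\<close>)
    moreover have "(\<lambda>m. Suc m \<le> depth par r x \<and> (par ^^ Suc m) x \<notin> Oc) =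
                   (\<lambda>m. m \<le> depth par r (par x) \<and> (par ^^ m) (par x) \<notin> Oc)"
      using dp by (auto simp: funpow_Suc_right simp del: funpow.simps)
    ultimately show ?thesis using True fe unfolding stop_index_def by simp
  next
    case False
    then show ?thesis using fe dp unfolding stop_index_def by simp
  qed
  have pe: "park_update par r Oc x = park_update par r Oc (par x)"
    unfolding park_update_def using fe se by (simp add: funpow_Suc_right del: funpow.simps)
  have ce: "crossed par r Oc x = insert (x, par x) (crossed par r Oc (par x))"
    unfolding crossed_def se
  proof (intro set_eqI iffI)
    fix e assume "e \<in> {((par ^^ j) x, (par ^^ Suc j) x) |j. j < Suc (stop_index par r Oc (par x))}"
    then obtain j where j: "e = ((par ^^ j) x, (par ^^ Suc j) x)" "j < Suc (stop_index par r Oc (par x))" by blast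
    show "e \<in> insert (x, par x) {((par ^^ j) (par x), (par ^^ Suc j) (par x)) |j. j < stop_index par r Oc (par x)}"
    proof (cases j)
      case 0 then show ?thesis using j by simp
    next
      case (Suc j') then show ?thesis using j
        by (auto simp only: funpow_Suc_right comp_apply)
    qed
  next
    fix e assume "e \<in> insert (x, par x) {((par ^^ j) (par x), (par ^^ Suc j) (par x)) |j. j < stop_index par r Oc (par x)}"
    then consider "e = (x, par x)" | j where "e = ((par ^^ j) (par x), (par ^^ Suc j) (par x))" "j < stop_index par r Oc (par x)" by blast
    then show "e \<in> {((par ^^ j) x, (par ^^ Suc j) x) |j. j < Suc (stop_index par r Oc (par x))}"
    proof cases
      case 1 then show ?thesis by (intro CollectI exI[of _ 0]) simp
    next
      case (2 j) then show ?thesis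
        by (intro CollectI exI[of _ "Suc j"]) (simp only: funpow_Suc_right comp_apply, simp)
    qed
  qed
  show ?thesis using pe ce by simp
qed


lemma par_in: "rooted_tree n r par \<Longrightarrow> v \<in> {1..n} \<Longrightarrow> par v \<in> {1..n}"
  by (auto simp: rooted_tree_def)

lemma g_free: "x \<notin> fst st \<Longrightarrow> gstep par r st x = (insert x (fst st), snd st)"
  unfolding gstep_def using L1 by simp

lemma g_root: "r \<in> fst st \<Longrightarrow> gstep par r st r = st"
  unfolding gstep_def using L2 by (simp add: prod_eq_iff)

lemma g_occ: "rooted_tree n r par \<Longrightarrow> x \<in> {1..n} \<Longrightarrow> x \<in> fst st \<Longrightarrow> x \<noteq> r \<Longrightarrow>
   gstep par r st x = (fst (gstep par r st (par x)), insert (x, par x) (snd (gstep par r st (par x))))"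
  unfolding gstep_def using L3[of n r par x "fst st"] by auto

lemma g_mono: "fst st \<subseteq> fst (gstep par r st x)"
  unfolding gstep_def park_update_def by auto

lemma g_addE: "gstep par r (a, insert e E) y = (fst (gstep par r (a, E) y), insert e (snd (gstep par r (a, E) y)))"
  unfolding gstep_def by auto

lemma gcomm:
  assumes T: "rooted_tree n r par"
  shows "x \<in> {1..n} \<Longrightarrow> y \<in> {1..n} \<Longrightarrow> gstep par r (gstep par r st x) y = gstep par r (gstep par r st y) x"
proof (induction "depth par r x + depth par r y" arbitrary: x y st rule: less_induct)
  case less
  show ?case
  proof (cases "x \<in> fst st \<and> x \<noteq> r")
    case True
    have px: "par x \<in> {1..n}" using par_in[OF T less(2)] .
    have dl: "depth par r (par x) + depth par r y < depth par r x + depth par r y"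
      using depth_par[OF T less(2)] True by simp
    have xin: "x \<in> fst (gstep par r st y)" using True g_mono by blast
    have "gstep par r (gstep par r st x) y = gstep par r (fst (gstep par r st (par x)), insert (x, par x) (snd (gstep par r st (par x)))) y"
      using g_occ[OF T less(2)] True by simp
    also have "\<dots> = (fst (gstep par r (gstep par r st (par x)) y), insert (x, par x) (snd (gstep par r (gstep par r st (par x)) y)))"
      by (simp add: g_addE)
    also have "\<dots> = (fst (gstep par r (gstep par r st y) (par x)), insert (x, par x) (snd (gstep par r (gstep par r st y) (par x))))"
      using less(1)[OF dl px less(3)] by simp
    also have "\<dots> = gstep par r (gstep par r st y) x"
      using g_occ[OF T less(2) xin] True by simp
    finally show ?thesis .
  next
    case Fx: False
    show ?thesis
    proof (cases "y \<in> fst st \<and> y \<noteq> r")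
      case True
      have py: "par y \<in> {1..n}" using par_in[OF T less(3)] .
      have dl: "depth par r x + depth par r (par y) < depth par r x + depth par r y"
        using depth_par[OF T less(3)] True by simp
      have yin: "y \<in> fst (gstep par r st x)" using True g_mono by blast
      have "gstep par r (gstep par r st y) x = gstep par r (fst (gstep par r st (par y)), insert (y, par y) (snd (gstep par r st (par y)))) x"
        using g_occ[OF T less(3)] True by simp
      also have "\<dots> = (fst (gstep par r (gstep par r st (par y)) x), insert (y, par y) (snd (gstep par r (gstep par r st (par y)) x)))"
        by (simp add: g_addE)
      also have "\<dots> = (fst (gstep par r (gstep par r st x) (par y)), insert (y, par y) (snd (gstep par r (gstep par r st x) (par y))))"
        using less(1)[OF dl less(2) py] by simp
      also have "\<dots> = gstep par r (gstep par r st x) y"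
        using g_occ[OF T less(3) yin] True by simp
      finally show ?thesis by simp
    next
      case Fy: False
      show ?thesis
      proof (cases "x = y")
        case True then show ?thesis by simp
      next
        case ne: False
        show ?thesis
        proof (cases "x \<in> fst st")
          case True
          hence xr: "x = r" using Fx by simp
          have yn: "y \<notin> fst st" using Fy ne xr by auto
          show ?thesis using xr True g_root[of r st par] g_free[OF yn, of par r]
            g_root[of r "gstep par r st y" par] by simp
        next
          case xn: False
          show ?thesis
          proof (cases "y \<in> fst st")
            case True
            hence yr: "y = r" using Fy by simp
            show ?thesis using yr True g_root[of r st par] g_free[OF xn, of par r]
              g_root[of r "gstep par r st x" par] by simp
          next
            case yn: False
            have "y \<notin> fst (gstep par r st x)" using yn ne g_free[OF xn, of par r] by simp
            moreover have "x \<notin> fst (gstep par r st y)" using xn ne g_free[OF yn, of par r] by simp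
            ultimately show ?thesis using g_free[OF xn, of par r] g_free[OF yn, of par r]
              g_free[of y "gstep par r st x" par r] g_free[of x "gstep par r st y" par r]
              by (simp add: insert_commute)
          qed
        qed
      qed
    qed
  qed
qed

lemma foldl_g:
  "foldl (gstep par r) (Oc, E) xs =
   (foldl (park_update par r) Oc xs,
    E \<union> (\<Union>i < length xs. crossed par r (foldl (park_update par r) Oc (take i xs)) (xs ! i)))"
proof (induction xs arbitrary: Oc E)
  case Nil then show ?case by simp
next
  case (Cons x xs)
  have "(\<Union>i < length (x # xs). crossed par r (foldl (park_update par r) Oc (take i (x # xs))) ((x # xs) ! i))
      = crossed par r Oc x \<union> (\<Union>i < length xs. crossed par r (foldl (park_update par r) (park_update par r Oc x) (take i xs)) (xs ! i))"
    by (simp add: lessThan_Suc_eq_insert_0 UN_insert image_Suc_lessThan[symmetric] del: image_Suc_lessThan)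
  then show ?case using Cons by (simp add: gstep_def Un_assoc)
qed

lemma used_edges_g: "used_edges par r s = snd (foldl (gstep par r) ({}, {}) s)"
  unfolding used_edges_def occ_after_def foldl_g by simp

lemma perm_used:
  assumes T: "rooted_tree n r par" and "set s \<subseteq> {1..n}" "mset s' = mset s"
  shows "used_edges par r s' = used_edges par r s"
proof -
  have "foldl (gstep par r) ({}, {}) s' = foldl (gstep par r) ({}, {}) s"
    unfolding foldl_conv_fold
  proof (rule fold_permuted_eq[where P="\<lambda>_. True"])
    have ss: "set s' \<subseteq> {1..n}" using assms mset_eq_setD by blast
    fix x y z assume "x \<in> set s'" "y \<in> set s'"
    then show "gstep par r (gstep par r z y) x = gstep par r (gstep par r z x) y"
      using gcomm[OF T, of x y z] ss by (metis subsetD)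
  qed (use assms in auto)
  thus ?thesis by (simp add: used_edges_g)
qed


lemma sub_mem: "w \<in> subtree n par u \<longleftrightarrow> w \<in> {1..n} \<and> (\<exists>k. (par ^^ k) w = u)"
  unfolding subtree_def by simp

lemma sub_finite: "finite (subtree n par u)"
  unfolding subtree_def by simp

lemma par_not_sub:
  assumes T: "rooted_tree n r par" and u: "u \<in> {1..n}" "u \<noteq> r"
  shows "par u \<notin> subtree n par u"
proof
  assume "par u \<in> subtree n par u"
  then obtain k where k: "(par ^^ k) (par u) = u" by (auto simp: sub_mem)
  hence k1: "(par ^^ Suc k) u = u" by (simp add: funpow_Suc_right del: funpow.simps)
  have per: "(par ^^ (m * Suc k)) u = u" for m
  proof (induction m)
    case (Suc m)
    have "(par ^^ (Suc m * Suc k)) u = (par ^^ (Suc k)) ((par ^^ (m * Suc k)) u)"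
      by (metis funpow_add comp_apply mult_Suc)
    then show ?case using Suc k1 by simp
  qed simp
  define d where "d = depth par r u"
  have dr: "(par ^^ d) u = r" using depth_spec[OF T u(1)] d_def by simp
  have "d \<le> d * Suc k" by simp
  then obtain t where t: "d * Suc k = t + d" using le_add_diff_inverse2 by metis
  have "u = (par ^^ (t + d)) u" using per[of d] t by (metis mult.commute)
  also have "\<dots> = r" using dr funpow_root[of par r] T
    by (simp add: funpow_add rooted_tree_def)
  finally show False using u by simp
qed

lemma root_not_sub:
  assumes T: "rooted_tree n r par" and u: "u \<noteq> r"
  shows "r \<notin> subtree n par u"
  using funpow_root[of par r] T u by (auto simp: sub_mem rooted_tree_def)

lemma not_in_sub_step:
  assumes T: "rooted_tree n r par" and u: "u \<in> {1..n}"
  shows "y \<in> {1..n} \<Longrightarrow> y \<notin> subtree n par u \<Longrightarrow>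
    park_update par r Oc y \<inter> subtree n par u = Oc \<inter> subtree n par u \<and> (u, par u) \<notin> crossed par r Oc y"
proof (induction "depth par r y" arbitrary: y rule: less_induct)
  case less
  show ?case
  proof (cases "y \<in> Oc")
    case False then show ?thesis using L1[OF False] less.prems by auto
  next
    case True
    show ?thesis
    proof (cases "y = r")
      case True then show ?thesis using L2[of r Oc par] \<open>y \<in> Oc\<close> by simp
    next
      case False
      have py: "par y \<in> {1..n}" using par_in[OF T less.prems(1)] .
      have pns: "par y \<notin> subtree n par u"
      proof
        assume "par y \<in> subtree n par u"
        then obtain k where "(par ^^ k) (par y) = u" by (auto simp: sub_mem)
        hence "(par ^^ Suc k) y = u" by (simp add: funpow_Suc_right del: funpow.simps)
        thus False using less.prems by (metis sub_mem)
      qed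
      have yu: "y \<noteq> u" using less.prems u by (metis sub_mem funpow_0)
      have "depth par r (par y) < depth par r y" using depth_par[OF T less.prems(1) False] by simp
      from less(1)[OF this py pns] show ?thesis
        using L3[OF T less.prems(1) True False] yu by simp
    qed
  qed
qed

lemma in_sub_step:
  assumes T: "rooted_tree n r par" and u: "u \<in> {1..n}" "u \<noteq> r"
  shows "x \<in> subtree n par u \<Longrightarrow>
    (card (park_update par r Oc x \<inter> subtree n par u) = Suc (card (Oc \<inter> subtree n par u)) \<and> (u, par u) \<notin> crossed par r Oc x)
    \<or> (park_update par r Oc x \<inter> subtree n par u = Oc \<inter> subtree n par u \<and> (u, par u) \<in> crossed par r Oc x)"
proof (induction "depth par r x" arbitrary: x rule: less_induct)
  case less
  have x: "x \<in> {1..n}" using less.prems by (simp add: sub_mem)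
  show ?case
  proof (cases "x \<in> Oc")
    case False
    have "park_update par r Oc x \<inter> subtree n par u = insert x (Oc \<inter> subtree n par u)"
      using L1[OF False] less.prems by auto
    moreover have "x \<notin> Oc \<inter> subtree n par u" using False by simp
    ultimately show ?thesis using L1[OF False] sub_finite[of n par u]
      by (simp add: finite_Int)
  next
    case True
    have xr: "x \<noteq> r" using root_not_sub[OF T u(2)] less.prems by auto
    note L = L3[OF T x True xr]
    show ?thesis
    proof (cases "x = u")
      case True
      have "park_update par r Oc (par u) \<inter> subtree n par u = Oc \<inter> subtree n par u"
        using not_in_sub_step[OF T u(1) par_in[OF T u(1)] par_not_sub[OF T u]] by simp
      then show ?thesis using L True by simp
    next
      case False
      obtain k where k: "(par ^^ k) x = u" using less.prems by (auto simp: sub_mem)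
      then obtain k' where "k = Suc k'" using False by (cases k) auto
      hence "(par ^^ k') (par x) = u" using k by (simp add: funpow_Suc_right del: funpow.simps)
      hence ps: "par x \<in> subtree n par u" using par_in[OF T x] by (auto simp: sub_mem)
      have "depth par r (par x) < depth par r x" using depth_par[OF T x xr] by simp
      from less(1)[OF this ps] show ?thesis using L False by auto
    qed
  qed
qed


lemma invariant:
  assumes T: "rooted_tree n r par" and u: "u \<in> {1..n}" "u \<noteq> r"
  shows "set xs \<subseteq> {1..n} \<Longrightarrow>
    ((u, par u) \<notin> snd (foldl (gstep par r) ({}, {}) xs) \<longrightarrow>
       card (fst (foldl (gstep par r) ({}, {}) xs) \<inter> subtree n par u) = length (filter (\<lambda>x. x \<in> subtree n par u) xs)) \<and>
    ((u, par u) \<in> snd (foldl (gstep par r) ({}, {}) xs) \<longrightarrow>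
       card (fst (foldl (gstep par r) ({}, {}) xs) \<inter> subtree n par u) < length (filter (\<lambda>x. x \<in> subtree n par u) xs))"
proof (induction xs rule: rev_induct)
  case Nil then show ?case by simp
next
  case (snoc x xs)
  define st where "st = foldl (gstep par r) ({}, {}) xs"
  define N where "N = length (filter (\<lambda>x. x \<in> subtree n par u) xs)"
  have IH: "((u, par u) \<notin> snd st \<longrightarrow> card (fst st \<inter> subtree n par u) = N) \<and>
            ((u, par u) \<in> snd st \<longrightarrow> card (fst st \<inter> subtree n par u) < N)"
    using snoc by (simp add: st_def N_def)
  have x: "x \<in> {1..n}" using snoc.prems by simp
  have eq: "foldl (gstep par r) ({}, {}) (xs @ [x]) = gstep par r st x" by (simp add: st_def)
  show ?case
  proof (cases "x \<in> subtree n par u")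
    case True
    have Nx: "length (filter (\<lambda>x. x \<in> subtree n par u) (xs @ [x])) = Suc N"
      using True by (simp add: N_def)
    from in_sub_step[OF T u True, of "fst st"] show ?thesis
      unfolding eq Nx using IH by (auto simp: gstep_def)
  next
    case False
    have Nx: "length (filter (\<lambda>x. x \<in> subtree n par u) (xs @ [x])) = N"
      using False by (simp add: N_def)
    from not_in_sub_step[OF T u(1) x False, of "fst st"] show ?thesis
      unfolding eq Nx using IH by (auto simp: gstep_def)
  qed
qed

lemma occ_full:
  assumes P: "parking_function n r par s"
  shows "i \<le> n \<Longrightarrow> card (occ_after par r s i) = i \<and> occ_after par r s i \<subseteq> {1..n}"
proof (induction i)
  case 0 then show ?case by (simp add: occ_after_def)
next
  case (Suc i)
  have T: "rooted_tree n r par" and len: "length s = n" and ss: "set s \<subseteq> {1..n}"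
    and fs: "finds_spot par r (occ_after par r s i) (s ! i)"
    using P Suc.prems by (auto simp: parking_function_def)
  define Oc where "Oc = occ_after par r s i"
  define x where "x = s ! i"
  have x: "x \<in> {1..n}" using ss len Suc.prems unfolding x_def by (metis Suc_le_lessD nth_mem subsetD)
  have IH: "card Oc = i" "Oc \<subseteq> {1..n}" using Suc by (auto simp: Oc_def)
  have fs': "finds_spot par r Oc x" using fs by (simp add: Oc_def x_def)
  define k where "k = stop_index par r Oc x"
  have kfree: "(par ^^ k) x \<notin> Oc"
  proof -
    obtain j where "j \<le> depth par r x \<and> (par ^^ j) x \<notin> Oc" using fs' unfolding finds_spot_def by blast
    hence "(LEAST k. k \<le> depth par r x \<and> (par ^^ k) x \<notin> Oc) \<le> depth par r x \<and>
       (par ^^ (LEAST k. k \<le> depth par r x \<and> (par ^^ k) x \<notin> Oc)) x \<notin> Oc"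
      by (rule LeastI)
    thus ?thesis using fs' by (simp add: k_def stop_index_def)
  qed
  have upd: "occ_after par r s (Suc i) = insert ((par ^^ k) x) Oc"
    unfolding occ_after_def using Suc.prems len fs'
    by (simp add: take_Suc_conv_app_nth Oc_def occ_after_def x_def park_update_def k_def)
  have fin: "finite Oc" using IH(2) finite_subset by blast
  show ?case using upd kfree IH fin funpow_in[OF T x, of k] by simp
qed

lemma final_full:
  assumes P: "parking_function n r par s"
  shows "fst (foldl (gstep par r) ({}, {}) s) = {1..n}"
proof -
  have len: "length s = n" using P by (simp add: parking_function_def)
  have "card (occ_after par r s n) = n \<and> occ_after par r s n \<subseteq> {1..n}" using occ_full[OF P] by simp
  hence "occ_after par r s n = {1..n}" by (metis card_atLeastAtMost card_subset_eq diff_Suc_1 finite_atLeastAtMost)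
  thus ?thesis using len by (simp add: foldl_g occ_after_def)
qed

theorem proposition2p4:
  fixes n r :: nat and par :: "nat \<Rightarrow> nat" and s :: "nat list"
  assumes "parking_function n r par s"
  shows "(\<forall>u v. (u, v) \<in> tree_edges n r par \<longrightarrow>
            ((u, v) \<in> used_edges par r s \<longleftrightarrow>
             card (subtree n par u) < card {i. i < n \<and> s ! i \<in> subtree n par u}))
       \<and> (\<forall>s'. mset s' = mset s \<longrightarrow> used_edges par r s' = used_edges par r s)"
proof
  have T: "rooted_tree n r par" and len: "length s = n" and ss: "set s \<subseteq> {1..n}"
    using assms by (auto simp: parking_function_def)
  show "\<forall>s'. mset s' = mset s \<longrightarrow> used_edges par r s' = used_edges par r s"
    using perm_used[OF T ss] by blast
  show "\<forall>u v. (u, v) \<in> tree_edges n r par \<longrightarrow>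
            ((u, v) \<in> used_edges par r s \<longleftrightarrow>
             card (subtree n par u) < card {i. i < n \<and> s ! i \<in> subtree n par u})"
  proof (intro allI impI)
    fix u v assume "(u, v) \<in> tree_edges n r par"
    hence u: "u \<in> {1..n}" "u \<noteq> r" and v: "v = par u" by (auto simp: tree_edges_def)
    have full: "fst (foldl (gstep par r) ({}, {}) s) \<inter> subtree n par u = subtree n par u"
      using final_full[OF assms] by (auto simp: subtree_def)
    have cnt: "length (filter (\<lambda>x. x \<in> subtree n par u) s) = card {i. i < n \<and> s ! i \<in> subtree n par u}"
      using len by (simp add: length_filter_conv_card)
    show "(u, v) \<in> used_edges par r s \<longleftrightarrow>
             card (subtree n par u) < card {i. i < n \<and> s ! i \<in> subtree n par u}"
      using invariant[OF T u ss] unfolding full cnt used_edges_g v by auto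
  qed
qed

end
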